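(* Let $M(k,l,m,n)=\langle x,y \mid y^m=x^l,\ x^n=1,\ y^{-1}xy=x^k\rangle$ be a metacyclic group, where $\gcd(n,k)=1$, $k^m\equiv 1 \pmod n$ and $l(k-1)\equiv 0\pmod n$. Let $I$ be a set of integers containing exactly one representative of each orbit of the action of $K=\langle y\rangle$ on $\mathbb{Z}/n$ given by $y\cdot u=ku$, and for $a\in I$ let $Ka=\{ak^i \bmod n: i\ge 0\}$. For $a,b,c\in I$ let $S(a,b,c)=|\{(r,s)\in Ka\times Kb : r+s\equiv c\pmod n\}|$. If $a,b,c\in I$ satisfy $S(a,b,c)\neq 0$, then $$\Big\{\frac{al}{n}\Big\}+\Big\{\frac{bl}{n}\Big\}-\Big\{\frac{cl}{n}\Big\}$$ is an integer, where $\{t\}$ denotes the fractional part of $t$. *)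

theory Defs
  imports Complex_Main "HOL-Number_Theory.Cong"
begin

definition orbitK :: "int \<Rightarrow> int \<Rightarrow> int \<Rightarrow> int set" where
  "orbitK n k a = {(a * k ^ i) mod n | i::nat. True}"

definition orbit_reps :: "int \<Rightarrow> int \<Rightarrow> int set \<Rightarrow> bool" where
  "orbit_reps n k I \<longleftrightarrow> (\<forall>u\<in>{0..<n}. \<exists>!a. a \<in> I \<and> a mod n \<in> orbitK n k u)"

definition S_count :: "int \<Rightarrow> int \<Rightarrow> int \<Rightarrow> int \<Rightarrow> int \<Rightarrow> nat" where
  "S_count n k a b c = card {(r, s). r \<in> orbitK n k a \<and> s \<in> orbitK n k b \<and> [r + s = c] (mod n)}"

end

theory Submission
  imports Defs
begin

lemma lk_pow: "[l * (k - 1) = 0] (mod n) \<Longrightarrow> [l * k ^ i = l] (mod (n::int))"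
proof (induction i)
  case 0 then show ?case by simp
next
  case (Suc i)
  have "[l * k ^ Suc i = (l * k ^ i) * k] (mod n)" by (simp add: algebra_simps)
  also have "[(l * k ^ i) * k = l * k] (mod n)" using Suc by (intro cong_mult) auto
  also have "[l * k = l] (mod n)"
  proof -
    have "[l * (k - 1) + l = 0 + l] (mod n)" using Suc.prems by (intro cong_add) auto
    then show ?thesis by (simp add: algebra_simps)
  qed
  finally show ?case .
qed

lemma orb: assumes "[l * (k - 1) = 0] (mod n)" "r \<in> orbitK n k a"
  shows "[l * r = l * a] (mod (n::int))"
proof -
  from assms(2) obtain i where r: "r = (a * k ^ i) mod n" unfolding orbitK_def by auto
  have "[l * r = l * (a * k ^ i)] (mod n)" unfolding r
    by (intro cong_mult) (auto simp: cong_def)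
  also have "l * (a * k ^ i) = a * (l * k ^ i)" by simp
  also have "[a * (l * k ^ i) = a * l] (mod n)" using lk_pow[OF assms(1)] by (intro cong_mult) auto
  finally show ?thesis by (simp add: mult.commute)
qed

theorem mainTheorem2:
  fixes k l n :: int and m :: nat and I :: "int set" and a b c :: int
  assumes "n > 0"
    and "gcd n k = 1"
    and "[k ^ m = 1] (mod n)"
    and "[l * (k - 1) = 0] (mod n)"
    and "orbit_reps n k I"
    and "a \<in> I" and "b \<in> I" and "c \<in> I"
    and "S_count n k a b c \<noteq> 0"
  shows "frac (real_of_int (a * l) / real_of_int n) + frac (real_of_int (b * l) / real_of_int n)
           - frac (real_of_int (c * l) / real_of_int n) \<in> \<int>"
proof -
  from assms(9) obtain r s where rs: "r \<in> orbitK n k a" "s \<in> orbitK n k b" "[r + s = c] (mod n)"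
    unfolding S_count_def by (metis (no_types, lifting) card.empty case_prodE empty_iff mem_Collect_eq subsetI subset_empty)
  have "[l * r + l * s = l * a + l * b] (mod n)"
    using orb[OF assms(4) rs(1)] orb[OF assms(4) rs(2)] by (intro cong_add)
  moreover have "[l * (r + s) = l * c] (mod n)" using rs(3) by (intro cong_mult) auto
  ultimately have "[l * a + l * b = l * c] (mod n)"
    by (metis cong_sym cong_trans distrib_left)
  then have "n dvd (a*l + b*l - c*l)"
    by (metis cong_iff_dvd_diff mult.commute)
  then obtain t where t: "a*l + b*l - c*l = n * t" by blast
  have "frac (real_of_int (a * l) / real_of_int n) + frac (real_of_int (b * l) / real_of_int n)
           - frac (real_of_int (c * l) / real_of_int n)
       = real_of_int (a*l + b*l - c*l) / real_of_int n
         - of_int (\<lfloor>real_of_int (a * l) / real_of_int n\<rfloor> + \<lfloor>real_of_int (b * l) / real_of_int n\<rfloor>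
               - \<lfloor>real_of_int (c * l) / real_of_int n\<rfloor>)"
    by (simp add: frac_def add_divide_distrib diff_divide_distrib)
  also have "real_of_int (a*l + b*l - c*l) / real_of_int n = of_int t"
    unfolding t using assms(1) by simp
  finally show ?thesis by (metis Ints_diff Ints_of_int)
qed

end
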